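(* Let $\Phi\colon\mathcal{M}(2;\mathbb{C})\dashrightarrow\mathcal{M}(2;\mathbb{C})$ be a rational map compatible with conjugation. Then $\mathcal{D}$ is invariant by $\Phi$, i.e. $\Phi(\mathcal{D}\setminus\mathrm{Ind}\,\Phi)\subset\mathcal{D}$.
   Context: $\mathcal{D}$ is the set of diagonal $2\times2$ complex matrices, $\mathrm{Ind}\,\Phi$ the indeterminacy locus of $\Phi$. $\Phi$ is compatible with conjugation if $\mathrm{A}\Phi(\mathrm{M})\mathrm{A}^{-1}=\Phi(\mathrm{A}\mathrm{M}\mathrm{A}^{-1})$ for all $\mathrm{A}\in\mathrm{GL}(2;\mathbb{C})$ whenever $\mathrm{M}$ and $\mathrm{A}\mathrm{M}\mathrm{A}^{-1}$ are in $\mathcal{M}(2;\mathbb{C})\setminus\mathrm{Ind}\,\Phi$. *)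

theory Defs
  imports "HOL-Analysis.Analysis"
begin

type_synonym cmat2 = "complex^2^2"

inductive poly_fun :: "(cmat2 \<Rightarrow> complex) \<Rightarrow> bool" where
  pf_const: "poly_fun (\<lambda>M. c)"
| pf_coord: "poly_fun (\<lambda>M. M $ i $ j)"
| pf_add: "poly_fun f \<Longrightarrow> poly_fun g \<Longrightarrow> poly_fun (\<lambda>M. f M + g M)"
| pf_mult: "poly_fun f \<Longrightarrow> poly_fun g \<Longrightarrow> poly_fun (\<lambda>M. f M * g M)"

definition regular_at :: "(cmat2 \<Rightarrow> cmat2) \<Rightarrow> cmat2 \<Rightarrow> bool" where
  "regular_at Phi M \<longleftrightarrow>
     (\<exists>P Q. (\<forall>i j. poly_fun (P i j)) \<and> poly_fun Q \<and> Q M \<noteq> 0 \<and>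
        (\<forall>N. Q N \<noteq> 0 \<longrightarrow> (\<forall>i j. Phi N $ i $ j = P i j N / Q N)))"

definition Ind :: "(cmat2 \<Rightarrow> cmat2) \<Rightarrow> cmat2 set" where
  "Ind Phi = {M. \<not> regular_at Phi M}"

text \<open>A rational map M(2;C) --> M(2;C): regular at some point
  (i.e. given by P_ij/Q with Q not identically zero).\<close>
definition rational_map :: "(cmat2 \<Rightarrow> cmat2) \<Rightarrow> bool" where
  "rational_map Phi \<longleftrightarrow> (\<exists>M. regular_at Phi M)"

definition diag_mats :: "cmat2 set" where
  "diag_mats = {M. \<forall>i j. i \<noteq> j \<longrightarrow> M $ i $ j = 0}"

definition compatible_with_conjugation :: "(cmat2 \<Rightarrow> cmat2) \<Rightarrow> bool" where
  "compatible_with_conjugation Phi \<longleftrightarrow>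
     (\<forall>A M. invertible A \<longrightarrow> M \<notin> Ind Phi \<longrightarrow> A ** M ** matrix_inv A \<notin> Ind Phi \<longrightarrow>
        A ** Phi M ** matrix_inv A = Phi (A ** M ** matrix_inv A))"

end

theory Submission
  imports Defs
begin

definition J :: cmat2 where "J = (\<chi> i j. if i = j then (if i = 1 then 1 else -1) else 0)"

lemma J_sq: "J ** J = mat 1"
  unfolding J_def by (simp add: matrix_matrix_mult_def mat_def vec_eq_iff sum_2 forall_2)

lemma J_inv: "invertible J" "matrix_inv J = J"
proof -
  show "invertible J" unfolding invertible_def using J_sq by blast
  have ex: "\<exists>A'. J ** A' = mat 1 \<and> A' ** J = mat 1" using J_sq by blast
  define B where "B = matrix_inv J"
  have B: "J ** B = mat 1 \<and> B ** J = mat 1"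
    unfolding B_def matrix_inv_def by (rule someI_ex[OF ex])
  have "B = B ** (J ** J)" by (simp add: J_sq)
  also have "\<dots> = (B ** J) ** J" by (simp add: matrix_mul_assoc)
  also have "\<dots> = J" using B by simp
  finally show "matrix_inv J = J" unfolding B_def .
qed

lemma J_conj: "J ** X ** J = (\<chi> i j. if i = j then X $ i $ j else - X $ i $ j)"
  unfolding J_def by (simp add: matrix_matrix_mult_def vec_eq_iff sum_2 forall_2)

theorem lemma2p1:
  fixes Phi :: "cmat2 \<Rightarrow> cmat2"
  assumes "rational_map Phi"
    and "compatible_with_conjugation Phi"
  shows "Phi ` (diag_mats - Ind Phi) \<subseteq> diag_mats"
proof
  fix Y assume "Y \<in> Phi ` (diag_mats - Ind Phi)"
  then obtain M where M: "M \<in> diag_mats" "M \<notin> Ind Phi" and Y: "Y = Phi M" by blast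
  have MM: "J ** M ** J = M"
    using M(1) unfolding J_conj diag_mats_def by (auto simp add: vec_eq_iff)
  have "J ** Phi M ** matrix_inv J = Phi (J ** M ** matrix_inv J)"
  proof -
    have C: "\<forall>A M. invertible A \<longrightarrow> M \<notin> Ind Phi \<longrightarrow> A ** M ** matrix_inv A \<notin> Ind Phi \<longrightarrow>
        A ** Phi M ** matrix_inv A = Phi (A ** M ** matrix_inv A)"
      using assms(2) unfolding compatible_with_conjugation_def .
    have "J ** M ** matrix_inv J \<notin> Ind Phi" using MM J_inv(2) M(2) by simp
    then show ?thesis using C[rule_format, OF J_inv(1) M(2)] by blast
  qed
  hence "J ** Y ** J = Y" using Y MM J_inv(2) by simp
  hence E0: "(\<chi> i j. if i = j then Y $ i $ j else - Y $ i $ j) = Y"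
    unfolding J_conj .
  have E: "(if i = j then Y $ i $ j else - Y $ i $ j) = Y $ i $ j" for i j
  proof -
    have "(\<chi> i j. if i = j then Y $ i $ j else - Y $ i $ j) $ i $ j = Y $ i $ j"
      by (subst E0) (rule refl)
    thus ?thesis by simp
  qed
  show "Y \<in> diag_mats" unfolding diag_mats_def
  proof (intro CollectI allI impI)
    fix i j :: 2 assume "i \<noteq> j"
    with E[of i j] have "- Y $ i $ j = Y $ i $ j" by simp
    thus "Y $ i $ j = 0" by simp
  qed
qed

end
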